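(* Let $n,m\ge1$ and $1\le t\le m$ be integers, and let $\pi$ be a uniformly random permutation of $[nm]$. For $i\in[n]$ let $U^i_\pi=\{\pi(1),\dots,\pi(t)\}\cap\{m(i-1)+1,\dots,mi\}$ and $C_\pi=\max_{i\in[n]}|U^i_\pi|$. Then for every integer $j$ with $1\le j<t$, $$\Pr_\pi[C_\pi=j]\le\frac{n\binom{m}{t}}{\binom{nm}{t}}\,(nm)^{3(t-j)}.$$ *)

theory Defs
  imports "HOL-Probability.Probability" "HOL-Combinatorics.Permutations"
begin

definition U_block :: "nat \<Rightarrow> nat \<Rightarrow> (nat \<Rightarrow> nat) \<Rightarrow> nat \<Rightarrow> nat set" where
  "U_block m t \<pi> i = \<pi> ` {1..t} \<inter> {m * (i - 1) + 1 .. m * i}"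

definition C_max :: "nat \<Rightarrow> nat \<Rightarrow> nat \<Rightarrow> (nat \<Rightarrow> nat) \<Rightarrow> nat" where
  "C_max n m t \<pi> = Max ((\<lambda>i. card (U_block m t \<pi> i)) ` {1..n})"

end

theory Submission
  imports Defs
begin

lemma card_perm_stab:
  assumes "finite X" "T \<subseteq> X"
  shows "card {\<rho>. \<rho> permutes X \<and> \<rho> ` T = T} \<le> fact (card T) * fact (card (X - T))"
proof -
  let ?A = "{\<rho>. \<rho> permutes X \<and> \<rho> ` T = T}"
  define h where "h \<rho> = ((\<lambda>x. if x \<in> T then \<rho> x else x), (\<lambda>x. if x \<in> X - T then \<rho> x else x))" for \<rho> :: "'a \<Rightarrow> 'a"
  have fT: "finite T" using assms finite_subset by blast
  have fXT: "finite (X - T)" using assms by simp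
  have finprod: "finite ({p. p permutes T} \<times> {p. p permutes (X - T)})"
    using finite_permutations[OF fT] finite_permutations[OF fXT] by simp
  have "inj_on h ?A"
  proof (rule inj_onI)
    fix a b assume a: "a \<in> ?A" and b: "b \<in> ?A" and e: "h a = h b"
    show "a = b"
    proof
      fix x
      show "a x = b x"
      proof (cases "x \<in> X")
        case True
        then show ?thesis using e unfolding h_def by (auto simp: fun_eq_iff split: if_splits)
      next
        case False
        then show ?thesis using a b permutes_not_in by (metis (no_types, lifting) mem_Collect_eq)
      qed
    qed
  qed
  moreover have "h ` ?A \<subseteq> {p. p permutes T} \<times> {p. p permutes (X - T)}"
  proof
    fix y assume "y \<in> h ` ?A"
    then obtain \<rho> where r: "\<rho> permutes X" "\<rho> ` T = T" and y: "y = h \<rho>" by auto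
    have inj: "inj_on \<rho> X" using r(1) permutes_inj_on by blast
    have im: "\<rho> ` (X - T) = X - T"
      using r permutes_image[OF r(1)] inj assms(2) by (simp add: inj_on_image_set_diff)
    have bT: "bij_betw \<rho> T T" unfolding bij_betw_def using inj_on_subset[OF inj assms(2)] r(2) by blast
    have bXT: "bij_betw \<rho> (X - T) (X - T)" unfolding bij_betw_def using inj_on_subset[OF inj, of "X - T"] im by blast
    have p1: "(\<lambda>x. if x \<in> T then \<rho> x else x) permutes T"
      unfolding permutes_altdef
    proof
      show "bij_betw (\<lambda>x. if x \<in> T then \<rho> x else x) T T"
        using bT by (rule bij_betw_cong[THEN iffD1, rotated]) simp
    qed auto
    have p2: "(\<lambda>x. if x \<in> X - T then \<rho> x else x) permutes (X - T)"
      unfolding permutes_altdef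
    proof
      show "bij_betw (\<lambda>x. if x \<in> X - T then \<rho> x else x) (X - T) (X - T)"
        using bXT by (rule bij_betw_cong[THEN iffD1, rotated]) simp
    qed auto
    show "y \<in> {p. p permutes T} \<times> {p. p permutes (X - T)}" using p1 p2 y unfolding h_def by simp
  qed
  ultimately have "card ?A \<le> card ({p. p permutes T} \<times> {p. p permutes (X - T)})"
    using card_inj_on_le[OF _ _ finprod] by blast
  also have "\<dots> = fact (card T) * fact (card (X - T))"
    using card_permutations[OF refl fT] card_permutations[OF refl fXT] by (simp add: card_cartesian_product)
  finally show ?thesis .
qed

lemma ex_perm_map:
  assumes "finite X" "S \<subseteq> X" "T \<subseteq> X" "card S = card T"
  shows "\<exists>\<sigma>. \<sigma> permutes X \<and> \<sigma> ` S = T"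
proof -
  have fS: "finite S" "finite T" using assms finite_subset by auto
  obtain f where f: "bij_betw f S T" using finite_same_card_bij fS assms(4) by blast
  have "card (X - S) = card (X - T)"
    using card_Diff_subset[OF fS(1) assms(2)] card_Diff_subset[OF fS(2) assms(3)] assms(4) by simp
  moreover have "finite (X - S)" "finite (X - T)" using assms(1) by simp_all
  ultimately obtain g where g: "bij_betw g (X - S) (X - T)" using finite_same_card_bij by metis
  define \<sigma> where "\<sigma> x = (if x \<in> S then f x else if x \<in> X - S then g x else x)" for x
  have b1: "bij_betw \<sigma> S T" using f by (rule bij_betw_cong[THEN iffD1, rotated]) (simp add: \<sigma>_def)
  have b2: "bij_betw \<sigma> (X - S) (X - T)" using g by (rule bij_betw_cong[THEN iffD1, rotated]) (simp add: \<sigma>_def)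
  have "bij_betw \<sigma> (S \<union> (X - S)) (T \<union> (X - T))" by (rule bij_betw_combine[OF b1 b2]) auto
  moreover have "S \<union> (X - S) = X" "T \<union> (X - T) = X" using assms by auto
  ultimately have "bij_betw \<sigma> X X" by simp
  hence "\<sigma> permutes X" unfolding permutes_altdef using assms(2) by (auto simp: \<sigma>_def)
  moreover have "\<sigma> ` S = T" using b1 bij_betw_imp_surj_on by blast
  ultimately show ?thesis by blast
qed

lemma card_perm_map:
  assumes "finite X" "S \<subseteq> X" "T \<subseteq> X" "card S = card T"
  shows "card {\<pi>. \<pi> permutes X \<and> \<pi> ` T = S} \<le> fact (card T) * fact (card (X - T))"
proof -
  obtain \<sigma> where s: "\<sigma> permutes X" "\<sigma> ` S = T" using ex_perm_map assms by metis
  have "inj_on ((\<circ>) \<sigma>) {\<pi>. \<pi> permutes X \<and> \<pi> ` T = S}"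
    using permutes_inj[OF s(1)] by (auto intro!: inj_onI simp: fun_eq_iff inj_def)
  moreover have "((\<circ>) \<sigma>) ` {\<pi>. \<pi> permutes X \<and> \<pi> ` T = S} \<subseteq> {\<rho>. \<rho> permutes X \<and> \<rho> ` T = T}"
  proof
    fix r assume "r \<in> ((\<circ>) \<sigma>) ` {\<pi>. \<pi> permutes X \<and> \<pi> ` T = S}"
    then obtain \<pi> where p: "\<pi> permutes X" "\<pi> ` T = S" "r = \<sigma> \<circ> \<pi>" by auto
    have "r ` T = \<sigma> ` (\<pi> ` T)" using p(3) by (simp add: image_comp)
    then show "r \<in> {\<rho>. \<rho> permutes X \<and> \<rho> ` T = T}" using p s permutes_compose by auto
  qed
  moreover have "finite {\<rho>. \<rho> permutes X \<and> \<rho> ` T = T}" using finite_permutations[OF assms(1)] by simp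
  ultimately have "card {\<pi>. \<pi> permutes X \<and> \<pi> ` T = S} \<le> card {\<rho>. \<rho> permutes X \<and> \<rho> ` T = T}"
    using card_inj_on_le by blast
  also have "\<dots> \<le> fact (card T) * fact (card (X - T))" by (rule card_perm_stab[OF assms(1,3)])
  finally show ?thesis .
qed

lemma binom_step:
  assumes "j + d \<le> (m::nat)"
  shows "m choose j \<le> (m choose (j + d)) * m ^ d"
  using assms
proof (induction d arbitrary: j)
  case 0 then show ?case by simp
next
  case (Suc d)
  have "j < m" using Suc.prems by simp
  have "m choose j \<le> (m - j) * (m choose j)" using \<open>j < m\<close> by simp
  also have "\<dots> = Suc j * (m choose Suc j)"
    using binomial_absorb_comp[of m j] Suc_times_binomial[of j "m - 1"] \<open>j < m\<close>
    by (metis Suc_pred' less_nat_zero_code not_gr_zero)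
  also have "\<dots> \<le> m * (m choose Suc j)" using \<open>j < m\<close> by (intro mult_le_mono1) simp
  also have "m choose Suc j \<le> (m choose (Suc j + d)) * m ^ d" using Suc.IH[of "Suc j"] Suc.prems by simp
  finally show ?case by (simp add: mult_ac)
qed

theorem mainTheorem16:
  fixes n m t j :: nat
  assumes "n \<ge> 1" "m \<ge> 1" "1 \<le> t" "t \<le> m" "1 \<le> j" "j < t"
  shows "measure_pmf.prob (pmf_of_set {\<pi>. \<pi> permutes {1..n*m}}) {\<pi>. C_max n m t \<pi> = j}
           \<le> real n * real (m choose t) / real ((n*m) choose t) * real (n*m) ^ (3 * (t - j))"
proof -
  define N where "N = n*m"
  define X where "X = {1..N}"
  define T where "T = {1..t}"
  define P where "P = {\<pi>. \<pi> permutes X}"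
  define A where "A = {\<pi>. \<pi> permutes X \<and> C_max n m t \<pi> = j}"
  define B where "B i = {m*(i-1)+1..m*i}" for i
  define F where "F i = {S. S \<subseteq> X \<and> card S = t \<and> card (S \<inter> B i) = j}" for i
  define K :: nat where "K = fact t * fact (N - t)"
  define E where "E S = {\<pi>. \<pi> permutes X \<and> \<pi> ` T = S}" for S
  have mN: "m \<le> N" using assms(1) unfolding N_def by simp
  have tN: "t \<le> N" using mN assms(4) by simp
  have finX: "finite X" and cardX: "card X = N" unfolding X_def by auto
  have TX: "T \<subseteq> X" and cardT: "card T = t" unfolding T_def X_def using tN by auto
  have cardXT: "card (X - T) = N - t" using TX cardT cardX finX by (simp add: card_Diff_subset finite_subset)
  have BX: "B i \<subseteq> X" and cardB: "card (B i) = m" if iin: "i \<in> {1..n}" for i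
  proof -
    obtain k where k: "i = Suc k" using iin Suc_le_D[of 0 i] by auto
    have "k < n" using iin k by simp
    then have "Suc k \<le> n" by simp
    then have "m * Suc k \<le> N" unfolding N_def by (metis mult.commute mult_le_mono2)
    then show "B i \<subseteq> X" unfolding B_def X_def k by auto
    show "card (B i) = m" unfolding B_def k by simp
  qed
  have EK: "card (E S) \<le> K" if "S \<in> F i" for S i
    unfolding E_def K_def using card_perm_map[OF finX, of S T] that TX cardT cardXT unfolding F_def by simp
  have finF: "finite (F i)" for i
    by (rule finite_subset[of _ "Pow X"]) (auto simp: F_def finX)
  have cardF: "card (F i) \<le> (m choose j) * (N choose (t - j))" if i: "i \<in> {1..n}" for i
  proof -
    define g where "g S = (S \<inter> B i, S - B i)" for S
    have "inj_on g (F i)" unfolding g_def by (rule inj_onI) (metis Int_Diff_Un prod.inject)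
    moreover have "g ` F i \<subseteq> {C. C \<subseteq> B i \<and> card C = j} \<times> {C. C \<subseteq> X \<and> card C = t - j}"
    proof
      fix y assume "y \<in> g ` F i"
      then obtain S where S: "S \<subseteq> X" "card S = t" "card (S \<inter> B i) = j" "y = g S"
        unfolding F_def by auto
      have "finite S" using S(1) finX finite_subset by blast
      then have "card (S - B i) = t - j" using S by (simp add: card_Diff_subset_Int)
      then show "y \<in> {C. C \<subseteq> B i \<and> card C = j} \<times> {C. C \<subseteq> X \<and> card C = t - j}"
        using S unfolding g_def by auto
    qed
    moreover have "finite ({C. C \<subseteq> B i \<and> card C = j} \<times> {C. C \<subseteq> X \<and> card C = t - j})"
    proof (rule finite_cartesian_product)
      have fB: "finite (B i)" using finite_subset[OF BX[OF i] finX] .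
      show "finite {C. C \<subseteq> B i \<and> card C = j}" by (rule finite_subset[of _ "Pow (B i)"]) (auto simp: fB)
      show "finite {C. C \<subseteq> X \<and> card C = t - j}" by (rule finite_subset[of _ "Pow X"]) (auto simp: finX)
    qed
    ultimately have "card (F i) \<le> card ({C. C \<subseteq> B i \<and> card C = j} \<times> {C. C \<subseteq> X \<and> card C = t - j})"
      using card_inj_on_le by blast
    also have "\<dots> = (m choose j) * (N choose (t - j))"
      using n_subsets[of "B i" j] n_subsets[OF finX, of "t - j"] finite_subset[OF BX[OF i] finX]
        cardB[OF i] cardX by (simp add: card_cartesian_product)
    finally show ?thesis .
  qed
  have sub: "A \<subseteq> (\<Union>i\<in>{1..n}. \<Union>S\<in>F i. E S)"
  proof
    fix \<pi> assume "\<pi> \<in> A"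
    then have p: "\<pi> permutes X" and c: "C_max n m t \<pi> = j" unfolding A_def by auto
    define c where "c i = card (U_block m t \<pi> i)" for i
    have "Max (c ` {1..n}) \<in> c ` {1..n}" using assms(1) by (intro Max_in) auto
    then obtain i where i: "i \<in> {1..n}" "c i = j" using c unfolding C_max_def c_def by auto
    have U: "U_block m t \<pi> i = \<pi> ` T \<inter> B i" unfolding U_block_def T_def B_def by simp
    have "\<pi> ` T \<subseteq> X" using p TX permutes_image by blast
    moreover have "card (\<pi> ` T) = t"
      using cardT card_image inj_on_subset[OF permutes_inj_on[OF p]] by (metis subset_UNIV)
    ultimately have "\<pi> ` T \<in> F i" using i U unfolding F_def c_def by auto
    moreover have "\<pi> \<in> E (\<pi> ` T)" unfolding E_def using p by auto
    ultimately show "\<pi> \<in> (\<Union>i\<in>{1..n}. \<Union>S\<in>F i. E S)" using i by blast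
  qed
  have finU: "finite (\<Union>i\<in>{1..n}. \<Union>S\<in>F i. E S)"
    by (rule finite_subset[of _ P]) (auto simp: E_def P_def finite_permutations finX)
  have "card A \<le> card (\<Union>i\<in>{1..n}. \<Union>S\<in>F i. E S)" by (rule card_mono[OF finU sub])
  also have "\<dots> \<le> (\<Sum>i\<in>{1..n}. card (\<Union>S\<in>F i. E S))" by (rule card_UN_le) simp
  also have "\<dots> \<le> (\<Sum>i\<in>{1..n}. (\<Sum>S\<in>F i. card (E S)))"
    by (intro sum_mono card_UN_le finF)
  also have "\<dots> \<le> (\<Sum>i\<in>{1..n}. card (F i) * K)"
  proof (intro sum_mono)
    fix i assume "i \<in> {1..n}"
    have "(\<Sum>S\<in>F i. card (E S)) \<le> (\<Sum>S\<in>F i. K)" by (intro sum_mono EK) auto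
    then show "(\<Sum>S\<in>F i. card (E S)) \<le> card (F i) * K" by simp
  qed
  also have "\<dots> \<le> (\<Sum>i\<in>{1..n}. (m choose j) * (N choose (t - j)) * K)"
    by (intro sum_mono mult_le_mono1 cardF)
  also have "\<dots> = n * ((m choose j) * (N choose (t - j)) * K)" by simp
  also have "\<dots> \<le> n * ((m choose t) * N ^ (3 * (t - j)) * K)"
  proof -
    have "m choose j \<le> (m choose t) * m ^ (t - j)" using binom_step[of j "t - j" m] assms by simp
    also have "\<dots> \<le> (m choose t) * N ^ (t - j)" using mN by (intro mult_le_mono2 power_mono) auto
    finally have 1: "m choose j \<le> (m choose t) * N ^ (t - j)" .
    have 2: "N choose (t - j) \<le> N ^ (t - j)" using tN by (intro binomial_le_pow) simp
    have "(m choose j) * (N choose (t - j)) \<le> (m choose t) * N ^ (t - j) * N ^ (t - j)"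
      using mult_le_mono[OF 1 2] by simp
    also have "\<dots> = (m choose t) * N ^ (2 * (t - j))" by (simp add: power_add[symmetric] mult_2)
    also have "\<dots> \<le> (m choose t) * N ^ (3 * (t - j))"
      using mN assms(2) by (intro mult_le_mono2 power_increasing) auto
    finally show ?thesis by (intro mult_le_mono2 mult_le_mono1)
  qed
  finally have cA: "card A \<le> n * ((m choose t) * N ^ (3 * (t - j)) * K)" .
  have finP: "finite P" "P \<noteq> {}" unfolding P_def using finite_permutations[OF finX] permutes_id[of X] by blast+
  have cP: "card P = K * (N choose t)"
    unfolding P_def K_def using card_permutations[OF cardX finX] binomial_fact_lemma[OF tN] by simp
  have PA: "P \<inter> {\<pi>. C_max n m t \<pi> = j} = A" unfolding P_def A_def by auto
  have Kpos: "K > 0" unfolding K_def by simp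
  have Cpos: "(N choose t) > 0" using tN by simp
  have "measure_pmf.prob (pmf_of_set P) {\<pi>. C_max n m t \<pi> = j} = real (card A) / real (card P)"
    using measure_pmf_of_set[OF finP(2) finP(1)] PA by simp
  also have "\<dots> \<le> real (n * ((m choose t) * N ^ (3 * (t - j)) * K)) / real (K * (N choose t))"
    unfolding cP using cA by (intro divide_right_mono) (simp_all only: of_nat_le_iff of_nat_0_le_iff)
  also have "\<dots> = real n * real (m choose t) / real (N choose t) * real N ^ (3 * (t - j))"
    using Kpos by (simp add: field_simps)
  finally show ?thesis unfolding P_def X_def N_def .
qed

end
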